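(* Let $G$ be a cubic bipartite graph with $2k$ vertices and a proper 3-edge-coloring. Then the number of faces of the faithful embedding of $G$ relative to the 3-coloring has the same parity as $k$. Consequently, if $M$ is an orientable map, then $\chi(M)$ is even.
   Context: A proper 3-edge-coloring (colors $a,b,c$) of a cubic graph gives the $ab$-, $bc$-, $ca$-polygons (cycles of edges of two colors); the faithful embedding is obtained by attaching a disc along each such polygon, so its faces correspond to these polygons. A map is a triple $M=(C_M,v_M,f_M)$ where $C_M$ is a finite cubic graph and $v_M,f_M$ are disjoint perfect matchings whose union is a disjoint union of 4-cycles (squares, set $SQ(M)$); $a_M$ is the third perfect matching; $\chi(M)=|vG(M)|-|SQ(M)|+|fG(M)|$ where $vG(M)$, $fG(M)$ are the sets of cycles of $v_M\cup a_M$ and $f_M\cup a_M$. $M$ is orientable if $C_M$ is bipartite. *)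

theory Defs
  imports Main
begin

text \<open>Finite loopless multigraphs: vertex set V, edge set E, and an endpoint map
  ends assigning to each edge its two-element set of end vertices (parallel edges allowed).\<close>

definition cubic_graph :: "'v set \<Rightarrow> 'e set \<Rightarrow> ('e \<Rightarrow> 'v set) \<Rightarrow> bool" where
  "cubic_graph V E ends \<longleftrightarrow> finite V \<and> finite E \<and>
     (\<forall>e\<in>E. ends e \<subseteq> V \<and> card (ends e) = 2) \<and>
     (\<forall>x\<in>V. card {e\<in>E. x \<in> ends e} = 3)"

definition bipartite :: "'v set \<Rightarrow> 'e set \<Rightarrow> ('e \<Rightarrow> 'v set) \<Rightarrow> bool" where
  "bipartite V E ends \<longleftrightarrow> (\<exists>A\<subseteq>V. \<forall>e\<in>E. card (ends e \<inter> A) = 1)"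

text \<open>Proper 3-edge-colouring with colours a, b, c encoded as 0, 1, 2.\<close>
definition proper_3_edge_coloring ::
    "'v set \<Rightarrow> 'e set \<Rightarrow> ('e \<Rightarrow> 'v set) \<Rightarrow> ('e \<Rightarrow> nat) \<Rightarrow> bool" where
  "proper_3_edge_coloring V E ends col \<longleftrightarrow> (\<forall>e\<in>E. col e \<in> {0,1,2}) \<and>
     (\<forall>x\<in>V. \<forall>e\<in>E. \<forall>e'\<in>E. x \<in> ends e \<and> x \<in> ends e' \<and> e \<noteq> e' \<longrightarrow> col e \<noteq> col e')"

definition perfect_matching :: "'v set \<Rightarrow> 'e set \<Rightarrow> ('e \<Rightarrow> 'v set) \<Rightarrow> 'e set \<Rightarrow> bool" where
  "perfect_matching V E ends M \<longleftrightarrow> M \<subseteq> E \<and> (\<forall>x\<in>V. card {e\<in>M. x \<in> ends e} = 1)"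

definition adj_rel :: "('e \<Rightarrow> 'v set) \<Rightarrow> 'e set \<Rightarrow> ('v \<times> 'v) set" where
  "adj_rel ends F = {(x, y). \<exists>e\<in>F. ends e = {x, y}}"

definition component :: "('e \<Rightarrow> 'v set) \<Rightarrow> 'e set \<Rightarrow> 'v \<Rightarrow> 'v set" where
  "component ends F x = {y. (x, y) \<in> (adj_rel ends F)\<^sup>*}"

definition num_components :: "'v set \<Rightarrow> ('e \<Rightarrow> 'v set) \<Rightarrow> 'e set \<Rightarrow> nat" where
  "num_components V ends F = card (component ends F ` V)"

text \<open>Number of faces of the faithful embedding = number of ab-, bc- and ca-polygons,
  i.e. cycles (components) of the two-coloured spanning subgraphs.\<close>
definition faithful_faces :: "'v set \<Rightarrow> 'e set \<Rightarrow> ('e \<Rightarrow> 'v set) \<Rightarrow> ('e \<Rightarrow> nat) \<Rightarrow> nat" where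
  "faithful_faces V E ends col =
     num_components V ends {e\<in>E. col e \<in> {0,1}} +
     num_components V ends {e\<in>E. col e \<in> {1,2}} +
     num_components V ends {e\<in>E. col e \<in> {2,0}}"

definition a_match :: "'e set \<Rightarrow> 'e set \<Rightarrow> 'e set \<Rightarrow> 'e set" where
  "a_match E v f = E - (v \<union> f)"

definition is_map :: "'v set \<Rightarrow> 'e set \<Rightarrow> ('e \<Rightarrow> 'v set) \<Rightarrow> 'e set \<Rightarrow> 'e set \<Rightarrow> bool" where
  "is_map V E ends v f \<longleftrightarrow> cubic_graph V E ends \<and>
     perfect_matching V E ends v \<and> perfect_matching V E ends f \<and> v \<inter> f = {} \<and>
     (\<forall>x\<in>V. card (component ends (v \<union> f) x) = 4) \<and>
     perfect_matching V E ends (a_match E v f)"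

definition map_orientable :: "'v set \<Rightarrow> 'e set \<Rightarrow> ('e \<Rightarrow> 'v set) \<Rightarrow> 'e set \<Rightarrow> 'e set \<Rightarrow> bool" where
  "map_orientable V E ends v f \<longleftrightarrow> bipartite V E ends"

definition euler_char :: "'v set \<Rightarrow> 'e set \<Rightarrow> ('e \<Rightarrow> 'v set) \<Rightarrow> 'e set \<Rightarrow> 'e set \<Rightarrow> int" where
  "euler_char V E ends v f =
     int (num_components V ends (v \<union> a_match E v f))
     - int (num_components V ends (v \<union> f))
     + int (num_components V ends (f \<union> a_match E v f))"

end

theory Submission
  imports Defs "HOL-Combinatorics.Permutations"
begin


definition Gr :: "('a \<Rightarrow> 'a) \<Rightarrow> 'a set \<Rightarrow> ('a \<times> 'a) set" where
  "Gr p S = {(y, p y)| y. y \<in> S} \<union> {(p y, y)| y. y \<in> S}"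

definition ocls :: "('a \<Rightarrow> 'a) \<Rightarrow> 'a set \<Rightarrow> 'a \<Rightarrow> 'a set" where
  "ocls p S y = {z. (y, z) \<in> (Gr p S)\<^sup>*}"

definition norb :: "('a \<Rightarrow> 'a) \<Rightarrow> 'a set \<Rightarrow> nat" where
  "norb p S = card (ocls p S ` S)"

lemma Gr_sym: "sym ((Gr p S)\<^sup>*)"
  apply (rule sym_rtrancl) unfolding Gr_def sym_def by blast

lemma Gr_symD: "(a, b) \<in> (Gr p S)\<^sup>* \<Longrightarrow> (b, a) \<in> (Gr p S)\<^sup>*"
  using Gr_sym[of p S] unfolding sym_def by blast

lemma Gr_edge: "y \<in> S \<Longrightarrow> (y, p y) \<in> (Gr p S)\<^sup>*"
  unfolding Gr_def by blast

lemma ocls_eq: "(y, w) \<in> (Gr p S)\<^sup>* \<Longrightarrow> ocls p S y = ocls p S w"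
  unfolding ocls_def using Gr_symD[of y w p S]
  by (auto intro: rtrancl_trans)

lemma skip_lemma:
  assumes perm: "p permutes S" and fin: "finite S" and xS: "x \<in> S" and px: "p x \<noteq> x"
  defines "q \<equiv> transpose x (p x) \<circ> p"
  shows "norb q S = Suc (norb p S)"
proof -
  have inj: "\<And>a b. p a = p b \<Longrightarrow> a = b" using permutes_inj[OF perm] by (meson injD)
  have pxS: "p x \<in> S" using permutes_in_image[OF perm] xS by blast
  have q1: "q x = x" unfolding q_def by simp
  have q2: "\<And>w. q w = x \<Longrightarrow> w = x"
  proof -
    fix w assume "q w = x"
    then have "p w = p x" unfolding q_def transpose_def using px by (auto split: if_splits)
    then show "w = x" using inj by blast
  qed
  have q3: "\<And>w. p w = x \<Longrightarrow> q w = p x" unfolding q_def by simp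
  have q4: "\<And>w. w \<noteq> x \<Longrightarrow> p w \<noteq> x \<Longrightarrow> q w = p w"
    unfolding q_def using inj by (metis comp_apply transpose_apply_other)
  have R'R: "(y, z) \<in> (Gr p S)\<^sup>*" if "(y, z) \<in> (Gr q S)\<^sup>*" for y z
    using that
  proof (induction rule: rtrancl_induct)
    case base then show ?case by simp
  next
    case (step b c)
    have e: "(w, q w) \<in> (Gr p S)\<^sup>*" if "w \<in> S" for w
    proof (cases "w = x")
      case True then show ?thesis using q1 by simp
    next
      case False
      show ?thesis
      proof (cases "p w = x")
        case True
        then have "q w = p (p w)" using q3 by simp
        moreover have "(w, p w) \<in> (Gr p S)\<^sup>*" using Gr_edge[OF that] .
        moreover have "(p w, p (p w)) \<in> (Gr p S)\<^sup>*" using Gr_edge[of "p w" S p] True xS by simp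
        ultimately show ?thesis by (metis rtrancl_trans)
      next
        case F2: False
        then show ?thesis using q4[OF False F2] Gr_edge[OF that, of p] by simp
      qed
    qed
    from step(2) obtain y where y: "y \<in> S" "(b, c) = (y, q y) \<or> (b, c) = (q y, y)"
      unfolding Gr_def by blast
    then have "(b, c) \<in> (Gr p S)\<^sup>*" using e[OF y(1)] Gr_symD[of y "q y" p S] by auto
    then show ?case using step(3) by (metis rtrancl_trans)
  qed
  have iso: "z = x" if "(x, z) \<in> (Gr q S)\<^sup>*" for z
    using that
  proof (induction rule: rtrancl_induct)
    case base then show ?case by simp
  next
    case (step b c)
    then show ?case unfolding Gr_def using q1 q2 by auto
  qed
  define \<phi> where "\<phi> w = (if w = x then p x else w)" for w
  have RR': "(\<phi> y, \<phi> z) \<in> (Gr q S)\<^sup>*" if "(y, z) \<in> (Gr p S)\<^sup>*" for y z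
    using that
  proof (induction rule: rtrancl_induct)
    case base then show ?case by simp
  next
    case (step b c)
    have e: "(\<phi> w, \<phi> (p w)) \<in> (Gr q S)\<^sup>*" if "w \<in> S" for w
    proof (cases "w = x")
      case True then show ?thesis using px unfolding \<phi>_def by simp
    next
      case False
      show ?thesis
      proof (cases "p w = x")
        case True
        then show ?thesis using q3 False Gr_edge[OF that, of q] unfolding \<phi>_def by simp
      next
        case F2: False
        then show ?thesis using q4 False Gr_edge[OF that, of q] unfolding \<phi>_def by simp
      qed
    qed
    from step(2) obtain y where y: "y \<in> S" "(b, c) = (y, p y) \<or> (b, c) = (p y, y)"
      unfolding Gr_def by blast
    then have "(\<phi> b, \<phi> c) \<in> (Gr q S)\<^sup>*" using e[OF y(1)] Gr_symD[of "\<phi> y" "\<phi> (p y)" q S] by auto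
    then show ?case using step(3) by (metis rtrancl_trans)
  qed
  have cx: "ocls q S x = {x}" unfolding ocls_def using iso by auto
  have cy: "ocls q S y = ocls p S y - {x}" if "y \<noteq> x" for y
  proof
    show "ocls q S y \<subseteq> ocls p S y - {x}"
    proof
      fix z assume "z \<in> ocls q S y"
      then have z: "(y, z) \<in> (Gr q S)\<^sup>*" unfolding ocls_def by simp
      have "z \<noteq> x"
      proof
        assume "z = x"
        then have "(x, y) \<in> (Gr q S)\<^sup>*" using Gr_symD[OF z] by simp
        then show False using iso that by blast
      qed
      then show "z \<in> ocls p S y - {x}" using R'R[OF z] unfolding ocls_def by simp
    qed
    show "ocls p S y - {x} \<subseteq> ocls q S y"
    proof
      fix z assume "z \<in> ocls p S y - {x}"
      then have "(\<phi> y, \<phi> z) \<in> (Gr q S)\<^sup>*" "z \<noteq> x" using RR' unfolding ocls_def by auto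
      then show "z \<in> ocls q S y" unfolding ocls_def \<phi>_def using that by simp
    qed
  qed
  have img: "ocls q S ` S = insert {x} ((\<lambda>C. C - {x}) ` (ocls p S ` (S - {x})))"
  proof -
    have "ocls q S ` S = ocls q S ` (insert x (S - {x}))" using xS by (simp add: insert_absorb)
    also have "\<dots> = insert {x} (ocls q S ` (S - {x}))" by (simp only: image_insert cx)
    also have "ocls q S ` (S - {x}) = (\<lambda>C. C - {x}) ` (ocls p S ` (S - {x}))"
      using cy by (auto simp: image_image)
    finally show ?thesis .
  qed
  have img2: "ocls p S ` (S - {x}) = ocls p S ` S"
  proof -
    have "ocls p S x = ocls p S (p x)" using ocls_eq Gr_edge xS by metis
    then show ?thesis using pxS px xS by (auto simp: image_iff)
  qed
  have ne: "\<exists>w. w \<in> C \<and> w \<noteq> x" if C: "C \<in> ocls p S ` S" for C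
  proof -
    obtain y where y: "y \<in> S" "C = ocls p S y" using C by blast
    show ?thesis
    proof (cases "y = x")
      case True
      have "(y, p x) \<in> (Gr p S)\<^sup>*" using Gr_edge[OF xS] True by simp
      then show ?thesis using y(2) px True unfolding ocls_def by auto
    next
      case False
      have "y \<in> C" using y(2) unfolding ocls_def by simp
      then show ?thesis using False by auto
    qed
  qed
  have injC: "inj_on (\<lambda>C. C - {x}) (ocls p S ` S)"
  proof (rule inj_onI)
    fix C D assume C: "C \<in> ocls p S ` S" and D: "D \<in> ocls p S ` S" and eq: "C - {x} = D - {x}"
    obtain w where w: "w \<in> C" "w \<noteq> x" using ne C by blast
    then have wD: "w \<in> D" using eq by blast
    obtain y where y: "C = ocls p S y" using C by blast
    obtain y' where y': "D = ocls p S y'" using D by blast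
    have "(y, w) \<in> (Gr p S)\<^sup>*" "(y', w) \<in> (Gr p S)\<^sup>*" using w(1) wD y y' unfolding ocls_def by auto
    then show "C = D" using y y' ocls_eq by metis
  qed
  have notin: "{x} \<notin> (\<lambda>C. C - {x}) ` (ocls p S ` S)" by auto
  have "norb q S = card (insert {x} ((\<lambda>C. C - {x}) ` (ocls p S ` S)))"
    unfolding norb_def img img2 ..
  also have "\<dots> = Suc (card ((\<lambda>C. C - {x}) ` (ocls p S ` S)))"
    using notin fin by simp
  also have "\<dots> = Suc (norb p S)" unfolding norb_def using card_image[OF injC] by simp
  finally show ?thesis .
qed

lemma norb_le: "finite S \<Longrightarrow> norb p S \<le> card S"
  unfolding norb_def by (rule card_image_le)

lemma norb_id: "norb id S = card S"
proof -
  have "ocls id S y = {y}" for y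
  proof -
    have "(y, z) \<in> (Gr id S)\<^sup>* \<Longrightarrow> z = y" for z
      by (induction rule: rtrancl_induct) (auto simp: Gr_def)
    then show ?thesis unfolding ocls_def by auto
  qed
  then show ?thesis unfolding norb_def by (simp add: card_image)
qed

lemma norb_parity:
  assumes "finite S" "p permutes S"
  shows "evenperm p \<longleftrightarrow> even (card S - norb p S)"
proof -
  have "\<And>p. p permutes S \<Longrightarrow> card {y\<in>S. p y \<noteq> y} = n \<Longrightarrow> evenperm p \<longleftrightarrow> even (card S - norb p S)" for n
  proof (induction n rule: less_induct)
    case (less n p)
    show ?case
    proof (cases "{y\<in>S. p y \<noteq> y} = {}")
      case True
      then have "p = id" using permutes_not_in[OF less(2)] by (auto simp: fun_eq_iff)
      then show ?thesis using norb_id[of S] by (simp add: id_def)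
    next
      case False
      then obtain x where xS: "x \<in> S" and px: "p x \<noteq> x" by blast
      define q where "q = transpose x (p x) \<circ> p"
      have pxS: "p x \<in> S" using permutes_in_image[OF less(2)] xS by blast
      have qperm: "q permutes S" unfolding q_def
        by (rule permutes_compose[OF less(2) permutes_swap_id[OF xS pxS]])
      have sub: "{y\<in>S. q y \<noteq> y} \<subseteq> {y\<in>S. p y \<noteq> y} - {x}"
      proof
        fix y assume y: "y \<in> {y\<in>S. q y \<noteq> y}"
        have "p y \<noteq> y"
        proof
          assume py: "p y = y"
          have "y \<noteq> x" using py px by auto
          moreover have "y \<noteq> p x" using py px permutes_inj[OF less(2)] by (metis injD)
          ultimately have "q y = y" unfolding q_def using py by simp
          then show False using y by simp
        qed
        moreover have "y \<noteq> x" using y unfolding q_def by auto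
        ultimately show "y \<in> {y\<in>S. p y \<noteq> y} - {x}" using y by auto
      qed
      have "card {y\<in>S. q y \<noteq> y} < n"
      proof -
        have "card {y\<in>S. q y \<noteq> y} \<le> card ({y\<in>S. p y \<noteq> y} - {x})"
          using sub assms(1) by (intro card_mono) auto
        also have "\<dots> < card {y\<in>S. p y \<noteq> y}" using xS px assms(1)
          by (intro psubset_card_mono) auto
        finally show ?thesis using less(3) by simp
      qed
      then have IH: "evenperm q \<longleftrightarrow> even (card S - norb q S)" using less(1) qperm by blast
      have ev: "evenperm q \<longleftrightarrow> \<not> evenperm p"
        unfolding q_def
        using evenperm_comp[OF permutes_imp_permutation[OF assms(1) permutes_swap_id[OF xS pxS]]
            permutes_imp_permutation[OF assms(1) less(2)]] evenperm_swap[of x "p x"] px by auto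
      have nq: "norb q S = Suc (norb p S)" unfolding q_def
        by (rule skip_lemma[OF less(2) assms(1) xS px])
      have "norb q S \<le> card S" by (rule norb_le[OF assms(1)])
      then show ?thesis using IH ev nq by auto
    qed
  qed
  then show ?thesis using assms(2) by blast
qed



locale cg3 =
  fixes V :: "'v set" and E :: "'e set" and ends :: "'e \<Rightarrow> 'v set" and col :: "'e \<Rightarrow> nat"
    and A :: "'v set"
  assumes cubic: "cubic_graph V E ends"
    and proper: "proper_3_edge_coloring V E ends col"
    and Asub: "A \<subseteq> V"
    and bip: "\<forall>e\<in>E. card (ends e \<inter> A) = 1"
begin

lemma finV: "finite V" using cubic unfolding cubic_graph_def by blast
lemma finE: "finite E" using cubic unfolding cubic_graph_def by blast
lemma finA: "finite A" using finV Asub finite_subset by blast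

lemma ends_sub: "e \<in> E \<Longrightarrow> ends e \<subseteq> V" using cubic unfolding cubic_graph_def by blast

lemma ends2: "e \<in> E \<Longrightarrow> x \<in> ends e \<Longrightarrow> \<exists>y. ends e = {x, y} \<and> x \<noteq> y"
proof -
  assume e: "e \<in> E" and x: "x \<in> ends e"
  have "card (ends e) = 2" using cubic e unfolding cubic_graph_def by blast
  then obtain a b where ab: "ends e = {a, b}" "a \<noteq> b" by (auto simp: card_2_iff)
  then show ?thesis using x by auto
qed

lemma col_range: "e \<in> E \<Longrightarrow> col e \<in> {0,1,2}" using proper unfolding proper_3_edge_coloring_def by blast

lemma edge_unique: "x \<in> V \<Longrightarrow> e \<in> E \<Longrightarrow> e' \<in> E \<Longrightarrow> x \<in> ends e \<Longrightarrow> x \<in> ends e' \<Longrightarrow> col e = col e' \<Longrightarrow> e = e'"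
  using proper unfolding proper_3_edge_coloring_def by blast

lemma edge_exists:
  assumes x: "x \<in> V" and i: "i \<in> {0,1,2}"
  shows "\<exists>e\<in>E. x \<in> ends e \<and> col e = i"
proof -
  let ?X = "{e\<in>E. x \<in> ends e}"
  have c3: "card ?X = 3" using cubic x unfolding cubic_graph_def by blast
  have inj: "inj_on col ?X" using edge_unique x by (auto intro: inj_onI)
  have sub: "col ` ?X \<subseteq> {0,1,2}" by (auto dest!: col_range)
  have "card (col ` ?X) = 3" using card_image[OF inj] c3 by simp
  then have "col ` ?X = {0,1,2}" using sub by (intro card_subset_eq) auto
  then have "i \<in> col ` ?X" using i by simp
  then obtain e where "e \<in> ?X" "col e = i" by blast
  then show ?thesis by blast
qed

definition mate :: "nat \<Rightarrow> 'v \<Rightarrow> 'v" where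
  "mate i x = (THE y. \<exists>e\<in>E. col e = i \<and> ends e = {x, y})"

lemma mate_eq:
  assumes x: "x \<in> V" and e: "e \<in> E" "col e = i" "ends e = {x, y}"
  shows "mate i x = y"
  unfolding mate_def
proof (rule the_equality)
  show "\<exists>e\<in>E. col e = i \<and> ends e = {x, y}" using e by blast
next
  fix y' assume "\<exists>e\<in>E. col e = i \<and> ends e = {x, y'}"
  then obtain e' where e': "e' \<in> E" "col e' = i" "ends e' = {x, y'}" by blast
  have "e' = e" using edge_unique[OF x e'(1) e(1)] e e' by simp
  then have "{x, y'} = {x, y}" using e e' by simp
  then show "y' = y" by (metis doubleton_eq_iff)
qed

lemma mate_edge:
  assumes x: "x \<in> V" and i: "i \<in> {0,1,2}"
  shows "\<exists>e\<in>E. col e = i \<and> ends e = {x, mate i x} \<and> x \<noteq> mate i x"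
proof -
  obtain e where e: "e \<in> E" "x \<in> ends e" "col e = i" using edge_exists[OF x i] by blast
  obtain y where y: "ends e = {x, y}" "x \<noteq> y" using ends2[OF e(1,2)] by blast
  have "mate i x = y" using mate_eq[OF x e(1) e(3) y(1)] .
  then show ?thesis using e y by blast
qed

lemma mate_V: "x \<in> V \<Longrightarrow> i \<in> {0,1,2} \<Longrightarrow> mate i x \<in> V"
  using mate_edge ends_sub by blast

lemma mate_mate: assumes "x \<in> V" "i \<in> {0,1,2}" shows "mate i (mate i x) = x"
proof -
  obtain e where e: "e \<in> E" "col e = i" "ends e = {x, mate i x}" using mate_edge[OF assms] by blast
  have "ends e = {mate i x, x}" using e by auto
  then show ?thesis using mate_eq[OF mate_V[OF assms] e(1,2)] by simp
qed

lemma mate_A: assumes "x \<in> V" "i \<in> {0,1,2}" shows "mate i x \<in> A \<longleftrightarrow> x \<notin> A"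
proof -
  obtain e where e: "e \<in> E" "col e = i" "ends e = {x, mate i x}" "x \<noteq> mate i x"
    using mate_edge[OF assms] by blast
  have "card ({x, mate i x} \<inter> A) = 1" using bip e by metis
  then show ?thesis using e(4) by (cases "x \<in> A"; cases "mate i x \<in> A") (auto simp: Int_insert_left)
qed

definition F :: "nat \<Rightarrow> nat \<Rightarrow> 'e set" where "F i j = {e\<in>E. col e \<in> {i, j}}"

lemma adj_D:
  assumes "(x, y) \<in> adj_rel ends (F i j)"
  shows "x \<in> V \<and> y \<in> V \<and> (y = mate i x \<or> y = mate j x)"
proof -
  obtain e where e: "e \<in> E" "col e \<in> {i, j}" "ends e = {x, y}"
    using assms unfolding adj_rel_def F_def by blast
  have xV: "x \<in> V" "y \<in> V" using ends_sub[OF e(1)] e(3) by auto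
  have "mate (col e) x = y" using mate_eq[OF xV(1) e(1) refl e(3)] .
  then show ?thesis using e(2) xV by auto
qed

lemma adj_I:
  assumes "x \<in> V" "k \<in> {i, j}" "k \<in> {0,1,2}"
  shows "(x, mate k x) \<in> adj_rel ends (F i j)"
proof -
  obtain e where e: "e \<in> E" "col e = k" "ends e = {x, mate k x}" using mate_edge[OF assms(1,3)] by blast
  then show ?thesis using assms(2) unfolding adj_rel_def F_def by auto
qed

lemma adj_sym: "(x, y) \<in> adj_rel ends G \<Longrightarrow> (y, x) \<in> adj_rel ends G"
  unfolding adj_rel_def by (auto simp: insert_commute)

lemma adj_rtr_sym: "(x, y) \<in> (adj_rel ends G)\<^sup>* \<Longrightarrow> (y, x) \<in> (adj_rel ends G)\<^sup>*"
proof -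
  have "sym ((adj_rel ends G)\<^sup>*)" by (rule sym_rtrancl) (auto simp: sym_def intro: adj_sym)
  then show "(x, y) \<in> (adj_rel ends G)\<^sup>* \<Longrightarrow> (y, x) \<in> (adj_rel ends G)\<^sup>*" unfolding sym_def by blast
qed

lemma comp_eq: "(x, y) \<in> (adj_rel ends G)\<^sup>* \<Longrightarrow> component ends G x = component ends G y"
  unfolding component_def using adj_rtr_sym[of x y G] by (auto intro: rtrancl_trans)

definition pi :: "nat \<Rightarrow> nat \<Rightarrow> 'v \<Rightarrow> 'v" where
  "pi i j x = (if x \<in> A then mate j (mate i x) else x)"

context
  fixes i j :: nat
  assumes i: "i \<in> {0,1,2}" and j: "j \<in> {0,1,2}"
begin

lemma pi_A: assumes x: "x \<in> A" shows "pi i j x \<in> A"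
proof -
  have xV: "x \<in> V" using x Asub by auto
  have "mate i x \<notin> A" using mate_A[OF xV i] x by simp
  then have "mate j (mate i x) \<in> A" using mate_A[OF mate_V[OF xV i] j] by simp
  then show ?thesis unfolding pi_def using x by simp
qed

lemma pi_permutes: "pi i j permutes A"
proof (rule bij_imp_permutes)
  have inj: "inj_on (pi i j) A"
  proof (rule inj_onI)
    fix x y assume x: "x \<in> A" and y: "y \<in> A" and eq: "pi i j x = pi i j y"
    then have "mate j (mate i x) = mate j (mate i y)" unfolding pi_def by simp
    then have eq': "mate j (mate j (mate i x)) = mate j (mate j (mate i y))" by simp
    have xV: "x \<in> V" and yV: "y \<in> V" using x y Asub by auto
    have "mate i x = mate i y" using eq' unfolding mate_mate[OF mate_V[OF xV i] j] mate_mate[OF mate_V[OF yV i] j] .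
    then have "mate i (mate i x) = mate i (mate i y)" by simp
    then show "x = y" using mate_mate[OF xV i] mate_mate[OF yV i] by simp
  qed
  have "pi i j ` A \<subseteq> A" using pi_A by auto
  then have "pi i j ` A = A" using endo_inj_surj[OF finA _ inj] by simp
  then show "bij_betw (pi i j) A A" using inj by (simp add: bij_betw_def)
next
  show "\<And>x. x \<notin> A \<Longrightarrow> pi i j x = x" unfolding pi_def by simp
qed

lemma Gr_A: "(x, z) \<in> (Gr (pi i j) A)\<^sup>* \<Longrightarrow> x \<in> A \<Longrightarrow> z \<in> A"
proof (induction rule: rtrancl_induct)
  case (step b c)
  then obtain y where "y \<in> A" "(b, c) = (y, pi i j y) \<or> (b, c) = (pi i j y, y)" unfolding Gr_def by blast
  then show ?case using pi_A by auto
qed simp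

lemma key: assumes x: "x \<in> A" shows "component ends (F i j) x \<inter> A = ocls (pi i j) A x"
proof
  define \<rho> where "\<rho> w = (if w \<in> A then w else mate i w)" for w
  have stp: "(\<rho> w, \<rho> u) \<in> (Gr (pi i j) A)\<^sup>*" if wu: "(w, u) \<in> adj_rel ends (F i j)" for w u
  proof -
    have d: "w \<in> V" "u \<in> V" "u = mate i w \<or> u = mate j w" using adj_D[OF wu] by auto
    have mAi: "mate i w \<in> A \<longleftrightarrow> w \<notin> A" using mate_A[OF d(1) i] .
    have mAj: "mate j w \<in> A \<longleftrightarrow> w \<notin> A" using mate_A[OF d(1) j] .
    have mmi: "mate i (mate i w) = w" using mate_mate[OF d(1) i] .
    have mmj: "mate j (mate j w) = w" using mate_mate[OF d(1) j] .
    have uA: "u \<in> A \<longleftrightarrow> w \<notin> A" using d(3) mAi mAj by blast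
    show ?thesis
    proof (cases "u = mate i w")
      case True
      then show ?thesis using uA mmi unfolding \<rho>_def by auto
    next
      case False
      then have u: "u = mate j w" using d by simp
      show ?thesis
      proof (cases "w \<in> A")
        case True
        have uA': "u \<notin> A" using uA True by simp
        have yA: "mate i u \<in> A" using mate_A[OF d(2) i] uA' by simp
        have "pi i j (mate i u) = mate j (mate i (mate i u))" unfolding pi_def using yA by simp
        also have "\<dots> = w" using mate_mate[OF d(2) i] u mmj by simp
        finally have "(mate i u, w) \<in> Gr (pi i j) A" using yA unfolding Gr_def by force
        then have "(w, mate i u) \<in> Gr (pi i j) A" unfolding Gr_def by blast
        then show ?thesis unfolding \<rho>_def using True uA' by auto
      next
        case False
        have uA': "u \<in> A" using uA False by simp
        have yA: "mate i w \<in> A" using mAi False by simp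
        have "pi i j (mate i w) = u" unfolding pi_def using yA mmi u by simp
        then have "(mate i w, u) \<in> Gr (pi i j) A" using yA unfolding Gr_def by force
        then show ?thesis unfolding \<rho>_def using False uA' by auto
      qed
    qed
  qed
  show "component ends (F i j) x \<inter> A \<subseteq> ocls (pi i j) A x"
  proof
    fix z assume z: "z \<in> component ends (F i j) x \<inter> A"
    have "(\<rho> x, \<rho> z) \<in> (Gr (pi i j) A)\<^sup>*" if "(x, z) \<in> (adj_rel ends (F i j))\<^sup>*"
      using that
    proof (induction rule: rtrancl_induct)
      case base then show ?case by simp
    next
      case (step b c)
      show ?case by (rule rtrancl_trans[OF step(3) stp[OF step(2)]])
    qed
    then show "z \<in> ocls (pi i j) A x" using z x unfolding component_def ocls_def \<rho>_def by auto
  qed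
  show "ocls (pi i j) A x \<subseteq> component ends (F i j) x \<inter> A"
  proof
    fix z assume z: "z \<in> ocls (pi i j) A x"
    then have zr: "(x, z) \<in> (Gr (pi i j) A)\<^sup>*" unfolding ocls_def by simp
    have e: "(y, pi i j y) \<in> (adj_rel ends (F i j))\<^sup>*" if y: "y \<in> A" for y
    proof -
      have yV: "y \<in> V" using y Asub by auto
      have "(y, mate i y) \<in> adj_rel ends (F i j)" using adj_I[OF yV _ i] by simp
      moreover have "(mate i y, mate j (mate i y)) \<in> adj_rel ends (F i j)"
        using adj_I[OF mate_V[OF yV i] _ j] by simp
      ultimately show ?thesis unfolding pi_def using y by simp
    qed
    have "(x, z) \<in> (adj_rel ends (F i j))\<^sup>*" using zr
    proof (induction rule: rtrancl_induct)
      case base then show ?case by simp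
    next
      case (step b c)
      from step(2) obtain y where y: "y \<in> A" "(b, c) = (y, pi i j y) \<or> (b, c) = (pi i j y, y)"
        unfolding Gr_def by blast
      then have "(b, c) \<in> (adj_rel ends (F i j))\<^sup>*" using e[OF y(1)] adj_rtr_sym by auto
      then show ?case using step(3) by (metis rtrancl_trans)
    qed
    then show "z \<in> component ends (F i j) x \<inter> A"
      using Gr_A[OF zr x] unfolding component_def by simp
  qed
qed

lemma num_comp: "num_components V ends (F i j) = norb (pi i j) A"
proof -
  let ?c = "component ends (F i j)"
  have "?c ` V = ?c ` A"
  proof
    show "?c ` A \<subseteq> ?c ` V" using Asub by auto
    show "?c ` V \<subseteq> ?c ` A"
    proof
      fix C assume "C \<in> ?c ` V"
      then obtain y where y: "y \<in> V" "C = ?c y" by blast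
      show "C \<in> ?c ` A"
      proof (cases "y \<in> A")
        case True then show ?thesis using y by blast
      next
        case False
        have "(y, mate i y) \<in> (adj_rel ends (F i j))\<^sup>*" using adj_I[OF y(1) _ i] by auto
        then have "C = ?c (mate i y)" using comp_eq y by metis
        moreover have "mate i y \<in> A" using mate_A y False i by simp
        ultimately show ?thesis by blast
      qed
    qed
  qed
  moreover have inj: "inj_on (\<lambda>C. C \<inter> A) (?c ` A)"
  proof (rule inj_onI)
    fix C D assume C: "C \<in> ?c ` A" and D: "D \<in> ?c ` A" and eq: "C \<inter> A = D \<inter> A"
    obtain x where x: "x \<in> A" "C = ?c x" using C by blast
    obtain y where y: "y \<in> A" "D = ?c y" using D by blast
    have "x \<in> C" using x unfolding component_def by simp
    then have "x \<in> D" using eq x by blast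
    then have "(y, x) \<in> (adj_rel ends (F i j))\<^sup>*" using y unfolding component_def by simp
    then show "C = D" using comp_eq x y by metis
  qed
  moreover have "(\<lambda>C. C \<inter> A) ` (?c ` A) = ocls (pi i j) A ` A"
    using key by (auto simp: image_image)
  ultimately show ?thesis unfolding num_components_def norb_def
    by (metis card_image)
qed

end

lemma cardV: "card V = 2 * card A"
proof -
  have inj: "inj_on (mate 0) A" using mate_mate Asub by (metis inj_on_inverseI insert_iff subsetD)
  have "mate 0 ` A = V - A"
  proof
    show "mate 0 ` A \<subseteq> V - A" using mate_A mate_V Asub by auto
    show "V - A \<subseteq> mate 0 ` A"
    proof
      fix y assume y: "y \<in> V - A"
      then have "y = mate 0 (mate 0 y)" "mate 0 y \<in> A" using mate_mate mate_A by auto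
      then show "y \<in> mate 0 ` A" by blast
    qed
  qed
  then have "card (V - A) = card A" using card_image[OF inj] by simp
  moreover have "card (V - A) = card V - card A" using card_Diff_subset[OF finA Asub] .
  moreover have "card A \<le> card V" using card_mono[OF finV Asub] .
  ultimately show ?thesis by linarith
qed

lemma faces_parity: "even (faithful_faces V E ends col) \<longleftrightarrow> even (card A)"
proof -
  have ff: "faithful_faces V E ends col = norb (pi 0 1) A + norb (pi 1 2) A + norb (pi 2 0) A"
    unfolding faithful_faces_def using num_comp[of 0 1] num_comp[of 1 2] num_comp[of 2 0]
    unfolding F_def by simp
  have p1: "pi 0 1 permutes A" and p2: "pi 1 2 permutes A" and p3: "pi 2 0 permutes A"
    using pi_permutes by auto
  have comp: "pi 2 0 \<circ> (pi 1 2 \<circ> pi 0 1) = id"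
  proof
    fix x show "(pi 2 0 \<circ> (pi 1 2 \<circ> pi 0 1)) x = id x"
    proof (cases "x \<in> A")
      case True
      have xV: "x \<in> V" using True Asub by auto
      have a1: "pi 0 1 x \<in> A" using pi_A[of 0 1] True by simp
      have a2: "pi 1 2 (pi 0 1 x) = mate 2 (mate 0 x)"
        using a1 True unfolding pi_def using mate_mate mate_V xV by simp
      have a3: "mate 2 (mate 0 x) \<in> A" using pi_A[of 1 2 "pi 0 1 x"] a1 a2 by simp
      show ?thesis using a2 a3 unfolding pi_def using mate_mate mate_V xV by simp
    next
      case False then show ?thesis unfolding pi_def by simp
    qed
  qed
  have pp: "\<And>p. p permutes A \<Longrightarrow> permutation p" using permutes_imp_permutation[OF finA] .
  have "evenperm (pi 2 0 \<circ> (pi 1 2 \<circ> pi 0 1))" using comp by simp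
  then have ev: "evenperm (pi 2 0) = (evenperm (pi 1 2) = evenperm (pi 0 1))"
    using evenperm_comp[OF pp[OF p3] permutation_compose[OF pp[OF p2] pp[OF p1]]]
      evenperm_comp[OF pp[OF p2] pp[OF p1]] by simp
  have e1: "evenperm (pi 0 1) \<longleftrightarrow> even (card A - norb (pi 0 1) A)" using norb_parity[OF finA p1] .
  have e2: "evenperm (pi 1 2) \<longleftrightarrow> even (card A - norb (pi 1 2) A)" using norb_parity[OF finA p2] .
  have e3: "evenperm (pi 2 0) \<longleftrightarrow> even (card A - norb (pi 2 0) A)" using norb_parity[OF finA p3] .
  have l1: "norb (pi 0 1) A \<le> card A" "norb (pi 1 2) A \<le> card A" "norb (pi 2 0) A \<le> card A"
    using norb_le[OF finA] by auto
  have dd: "\<And>m n::nat. n \<le> m \<Longrightarrow> even (m - n) \<longleftrightarrow> (even m \<longleftrightarrow> even n)" by presburger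
  show ?thesis unfolding ff using ev e1 e2 e3 dd[OF l1(1)] dd[OF l1(2)] dd[OF l1(3)] by auto
qed

end



lemma adj_in_V:
  assumes "\<forall>e\<in>G. ends e \<subseteq> V" "(x, y) \<in> adj_rel ends G"
  shows "x \<in> V \<and> y \<in> V"
  using assms unfolding adj_rel_def by auto

lemma comp_sub:
  assumes "\<forall>e\<in>G. ends e \<subseteq> V" "x \<in> V"
  shows "component ends G x \<subseteq> V"
proof
  fix z assume "z \<in> component ends G x"
  then have "(x, z) \<in> (adj_rel ends G)\<^sup>*" unfolding component_def by simp
  then show "z \<in> V"
  proof (induction rule: rtrancl_induct)
    case base then show ?case using assms(2) .
  next
    case (step b c) then show ?case using adj_in_V[OF assms(1)] by blast
  qed
qed

lemma adj_sym': "(x, y) \<in> adj_rel ends G \<Longrightarrow> (y, x) \<in> adj_rel ends G"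
  unfolding adj_rel_def by (auto simp: insert_commute)

lemma adj_rtr_sym': "(x, y) \<in> (adj_rel ends G)\<^sup>* \<Longrightarrow> (y, x) \<in> (adj_rel ends G)\<^sup>*"
proof -
  have "sym ((adj_rel ends G)\<^sup>*)" by (rule sym_rtrancl) (auto simp: sym_def intro: adj_sym')
  then show "(x, y) \<in> (adj_rel ends G)\<^sup>* \<Longrightarrow> (y, x) \<in> (adj_rel ends G)\<^sup>*" unfolding sym_def by blast
qed

lemma comp_eq': "(x, y) \<in> (adj_rel ends G)\<^sup>* \<Longrightarrow> component ends G x = component ends G y"
  unfolding component_def using adj_rtr_sym'[of x y ends G] by (auto intro: rtrancl_trans)

lemma partition4:
  assumes fin: "finite V" and sub: "\<forall>e\<in>G. ends e \<subseteq> V"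
    and c4: "\<forall>x\<in>V. card (component ends G x) = 4"
  shows "card V = 4 * num_components V ends G"
proof -
  let ?C = "component ends G ` V"
  have U: "\<Union>?C = V"
  proof
    show "\<Union>?C \<subseteq> V" using comp_sub[OF sub] by blast
    show "V \<subseteq> \<Union>?C" unfolding component_def by blast
  qed
  have pw: "pairwise disjnt ?C"
  proof (rule pairwiseI)
    fix C D assume C: "C \<in> ?C" and D: "D \<in> ?C" and ne: "C \<noteq> D"
    obtain x where x: "C = component ends G x" using C by blast
    obtain y where y: "D = component ends G y" using D by blast
    show "disjnt C D"
    proof (rule ccontr)
      assume "\<not> disjnt C D"
      then obtain z where "z \<in> C" "z \<in> D" unfolding disjnt_def by blast
      then have "(x, z) \<in> (adj_rel ends G)\<^sup>*" "(y, z) \<in> (adj_rel ends G)\<^sup>*"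
        using x y unfolding component_def by auto
      then have "C = D" using x y comp_eq' by metis
      then show False using ne by simp
    qed
  qed
  have finC: "\<And>C. C \<in> ?C \<Longrightarrow> finite C" using comp_sub[OF sub] fin finite_subset by blast
  have "card V = sum card ?C" using card_Union_disjoint[OF pw finC] U by simp
  also have "\<dots> = sum (\<lambda>_. 4) ?C" using c4 by (intro sum.cong) auto
  also have "\<dots> = 4 * card ?C" by simp
  finally show ?thesis unfolding num_components_def .
qed

lemma part1:
  assumes "cubic_graph V E ends" "bipartite V E ends" "card V = 2 * k"
    "proper_3_edge_coloring V E ends col"
  shows "even (faithful_faces V E ends col) \<longleftrightarrow> even k"
proof -
  obtain A where A: "A \<subseteq> V" "\<forall>e\<in>E. card (ends e \<inter> A) = 1" using assms(2) unfolding bipartite_def by blast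
  interpret cg3 V E ends col A using assms(1,4) A by unfold_locales
  have "k = card A" using cardV assms(3) by simp
  then show ?thesis using faces_parity by simp
qed

lemma pm_unique:
  assumes "perfect_matching V E ends M" "x \<in> V" "e \<in> M" "e' \<in> M" "x \<in> ends e" "x \<in> ends e'"
  shows "e = e'"
proof -
  have "card {e\<in>M. x \<in> ends e} = 1" using assms(1,2) unfolding perfect_matching_def by blast
  then obtain a where a: "{e\<in>M. x \<in> ends e} = {a}" by (auto simp: card_1_singleton_iff)
  have "e \<in> {e\<in>M. x \<in> ends e}" "e' \<in> {e\<in>M. x \<in> ends e}" using assms(3-6) by auto
  then show ?thesis unfolding a by simp
qed

lemma part2:
  assumes m: "is_map V E ends v f" and o: "map_orientable V E ends v f"
  shows "even (euler_char V E ends v f)"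
proof -
  define col where "col e = (if e \<in> v then 0 else if e \<in> f then 1 else (2::nat))" for e
  have cub: "cubic_graph V E ends" and pv: "perfect_matching V E ends v"
    and pf: "perfect_matching V E ends f" and vf: "v \<inter> f = {}"
    and sq: "\<forall>x\<in>V. card (component ends (v \<union> f) x) = 4"
    and pa: "perfect_matching V E ends (a_match E v f)"
    using m unfolding is_map_def by auto
  have vE: "v \<subseteq> E" and fE: "f \<subseteq> E" using pv pf unfolding perfect_matching_def by auto
  have proper: "proper_3_edge_coloring V E ends col"
    unfolding proper_3_edge_coloring_def
  proof (intro conjI ballI impI)
    fix e assume "e \<in> E" then show "col e \<in> {0,1,2}" unfolding col_def by auto
  next
    fix x e e' assume x: "x \<in> V" and e: "e \<in> E" and e': "e' \<in> E"
      and h: "x \<in> ends e \<and> x \<in> ends e' \<and> e \<noteq> e'"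
    show "col e \<noteq> col e'"
    proof
      assume eq: "col e = col e'"
      have "e = e'"
      proof (cases "e \<in> v")
        case True
        then have "e' \<in> v" using eq unfolding col_def by (auto split: if_splits)
        then show ?thesis using pm_unique[OF pv x True] h by blast
      next
        case False
        show ?thesis
        proof (cases "e \<in> f")
          case True
          then have "e' \<in> f" using eq False unfolding col_def by (auto split: if_splits)
          then show ?thesis using pm_unique[OF pf x True] h by blast
        next
          case F2: False
          then have "e' \<notin> v" "e' \<notin> f" using eq False unfolding col_def by (auto split: if_splits)
          then have "e \<in> a_match E v f" "e' \<in> a_match E v f" using e e' False F2
            unfolding a_match_def by auto
          then show ?thesis using pm_unique[OF pa x] h by blast
        qed
      qed
      then show False using h by simp
    qed
  qed
  have bip: "bipartite V E ends" using o unfolding map_orientable_def .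
  obtain A where A: "A \<subseteq> V" "\<forall>e\<in>E. card (ends e \<inter> A) = 1" using bip unfolding bipartite_def by blast
  interpret cg3 V E ends col A using cub proper A by unfold_locales
  have s1: "{e\<in>E. col e \<in> {0,1}} = v \<union> f" using vE fE vf unfolding col_def by auto
  have s2: "{e\<in>E. col e \<in> {1,2}} = f \<union> a_match E v f" using vE fE vf unfolding col_def a_match_def by auto
  have s3: "{e\<in>E. col e \<in> {2,0}} = v \<union> a_match E v f" using vE fE vf unfolding col_def a_match_def by auto
  let ?n1 = "num_components V ends (v \<union> a_match E v f)"
  let ?n2 = "num_components V ends (v \<union> f)"
  let ?n3 = "num_components V ends (f \<union> a_match E v f)"
  have ff: "faithful_faces V E ends col = ?n2 + ?n3 + ?n1" unfolding faithful_faces_def s1 s2 s3 ..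
  have subV: "\<forall>e\<in>v \<union> f. ends e \<subseteq> V" using vE fE ends_sub by blast
  have "card V = 4 * ?n2" using partition4[OF finV subV sq] .
  then have "card A = 2 * ?n2" using cardV by simp
  then have "even (faithful_faces V E ends col)" using faces_parity by simp
  then have "even (?n2 + ?n3 + ?n1)" using ff by simp
  then have "even (int ?n1 - int ?n2 + int ?n3)" by presburger
  then show ?thesis unfolding euler_char_def .
qed

theorem theorem1p7:
  shows "(\<forall>(V :: 'v set) (E :: 'e set) ends col (k :: nat).
            cubic_graph V E ends \<and> bipartite V E ends \<and> card V = 2 * k \<and>
            proper_3_edge_coloring V E ends col
            \<longrightarrow> (even (faithful_faces V E ends col) \<longleftrightarrow> even k)) \<and>
         (\<forall>(V :: 'w set) (E :: 'f set) ends v f.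
            is_map V E ends v f \<and> map_orientable V E ends v f
            \<longrightarrow> even (euler_char V E ends v f))"
  using part1 part2 by blast

end
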